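(* Every univariate real polynomial $p$ that is not identically zero is amenable as a function $p:\mathbb{R}\to\mathbb{R}$.
   Context: Relative distance on $\mathbb{R}$: $\mathrm{dist}(x,y)=0$ if $x=y=0$, $\mathrm{dist}(x,y)=|\log(y/x)|$ if $xy>0$, and $\mathrm{dist}(x,y)=\infty$ otherwise. For a real analytic function $f$ on an open set $\Omega\subseteq\mathbb{R}$, not identically zero, the condition number is $\kappa(f,x)=0$ if $x=0$, $\kappa(f,x)=\infty$ if $x\neq0$ and $f(x)=0$, and $\kappa(f,x)=|x|\,|f'(x)|/|f(x)|$ otherwise; $\mu(f,x)=1+\kappa(f,x)$. $f:\Omega\to\mathbb{R}$ is amenable if there is $C>0$ such that for every $x\in\Omega$ with $\kappa(f,x)<\infty$, the set $B_x=\{y\in\mathbb{R}:\mathrm{dist}(y,x)<1/(C\mu(f,x))\}$ is contained in $\Omega$ and $\mu(f,y)\leq C\mu(f,x)$ for all $y\in B_x$. *)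

theory Defs
  imports "HOL-Analysis.Analysis" "HOL-Computational_Algebra.Polynomial"
begin

definition rel_dist :: "real \<Rightarrow> real \<Rightarrow> ereal" where
  "rel_dist x y =
     (if x = 0 \<and> y = 0 then 0
      else if x * y > 0 then ereal \<bar>ln (y / x)\<bar>
      else \<infinity>)"

definition cond_num :: "(real \<Rightarrow> real) \<Rightarrow> real \<Rightarrow> ereal" where
  "cond_num f x =
     (if x = 0 then 0
      else if f x = 0 then \<infinity>
      else ereal (\<bar>x\<bar> * \<bar>deriv f x\<bar> / \<bar>f x\<bar>))"

definition mu_cond :: "(real \<Rightarrow> real) \<Rightarrow> real \<Rightarrow> ereal" where
  "mu_cond f x = 1 + cond_num f x"

definition amenable :: "(real \<Rightarrow> real) \<Rightarrow> real set \<Rightarrow> bool" where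
  "amenable f \<Omega> \<longleftrightarrow>
     (\<exists>C::real. C > 0 \<and>
       (\<forall>x\<in>\<Omega>. cond_num f x < \<infinity> \<longrightarrow>
          {y. rel_dist y x < 1 / (ereal C * mu_cond f x)} \<subseteq> \<Omega> \<and>
          (\<forall>y. rel_dist y x < 1 / (ereal C * mu_cond f x) \<longrightarrow>
               mu_cond f y \<le> ereal C * mu_cond f x)))"

end

theory Submission
  imports Defs
begin

lemma loc_bound:
  fixes F G :: "real \<Rightarrow> real"
  assumes "isCont F a" "isCont G a" "G a > 0"
  shows "\<exists>e>0. \<exists>B. \<forall>x. \<bar>x - a\<bar> < e \<longrightarrow> \<bar>F x\<bar> \<le> B * G x"
proof -
  have c: "isCont (\<lambda>x. F x / G x) a" using assms by (auto intro!: continuous_intros)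
  have "\<exists>d>0. \<forall>y. dist y a < d \<longrightarrow> dist (G y) (G a) < G a / 2"
    using continuous_at_eps_delta[THEN iffD1, OF assms(2), rule_format, of "G a / 2"] assms(3) by simp
  then obtain e1 where e1: "e1 > 0" "\<And>x. \<bar>x - a\<bar> < e1 \<Longrightarrow> \<bar>G x - G a\<bar> < G a / 2"
    by (auto simp: dist_real_def)
  have "\<exists>d>0. \<forall>y. dist y a < d \<longrightarrow> dist (F y / G y) (F a / G a) < 1"
    using continuous_at_eps_delta[THEN iffD1, OF c, rule_format, of 1] by simp
  then obtain e2 where e2: "e2 > 0" "\<And>x. \<bar>x - a\<bar> < e2 \<Longrightarrow> \<bar>F x / G x - F a / G a\<bar> < 1"
    by (auto simp: dist_real_def)
  have "\<bar>F x\<bar> \<le> (\<bar>F a / G a\<bar> + 1) * G x" if x: "\<bar>x - a\<bar> < min e1 e2" for x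
  proof -
    have "\<bar>G x - G a\<bar> < G a / 2" using e1(2)[of x] x by auto
    hence Gx: "G x > 0" using assms(3) unfolding abs_less_iff by linarith
    have d: "\<bar>F x / G x - F a / G a\<bar> < 1" using e2(2)[of x] x by auto
    have "\<bar>F x / G x\<bar> \<le> \<bar>F a / G a\<bar> + 1" using d abs_triangle_ineq2[of "F x / G x" "F a / G a"] by linarith
    hence "\<bar>F x / G x\<bar> * G x \<le> (\<bar>F a / G a\<bar> + 1) * G x" by (rule mult_right_mono) (use Gx in auto)
    moreover have "\<bar>F x / G x\<bar> * G x = \<bar>F x\<bar>" using Gx by (simp add: abs_divide)
    ultimately show ?thesis by simp
  qed
  moreover have "min e1 e2 > 0" using e1 e2 by simp
  ultimately show ?thesis by blast
qed

lemma inf_bound: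
  fixes f q :: "real poly"
  assumes "q \<noteq> 0" "degree f \<le> degree q"
  shows "\<exists>R B. \<forall>x. R \<le> \<bar>x\<bar> \<longrightarrow> \<bar>poly f x\<bar> \<le> B * \<bar>poly q x\<bar>"
proof -
  obtain L where L: "((\<lambda>x. poly f x / poly q x) \<longlongrightarrow> L) at_infinity"
  proof (cases "degree f < degree q")
    case True
    then show ?thesis using poly_divide_tendsto_0_at_infinity[OF True] that by blast
  next
    case False
    hence eq: "degree f = degree q" using assms by simp
    have t1: "((\<lambda>x. (poly f x / x ^ degree f) / (poly q x / x ^ degree q)) \<longlongrightarrow> lead_coeff f / lead_coeff q) at_infinity"
      by (rule tendsto_divide[OF poly_divide_tendsto_aux[of f] poly_divide_tendsto_aux[of q]]) (use assms(1) in simp)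
    moreover have ev1: "\<forall>\<^sub>F x in at_infinity. (poly f x / x ^ degree f) / (poly q x / x ^ degree q) = poly f x / poly q x"
    proof (rule eventually_at_infinityI[of 1])
      fix x :: real assume "1 \<le> norm x"
      hence c: "x ^ degree q \<noteq> 0" by auto
      show "(poly f x / x ^ degree f) / (poly q x / x ^ degree q) = poly f x / poly q x"
        unfolding eq divide_divide_eq_right using c by simp
    qed
    show ?thesis by (rule that, rule tendsto_cong[OF ev1, THEN iffD1, OF t1])
  qed
  have "\<forall>\<^sub>F x in at_infinity. dist (poly f x / poly q x) L < 1"
    using L by (rule tendstoD) simp
  moreover have "\<forall>\<^sub>F x in at_infinity. poly q x \<noteq> 0"
    using assms(1) by (rule poly_eventually_not_zero)
  ultimately have "\<forall>\<^sub>F x in at_infinity. \<bar>poly f x\<bar> \<le> (\<bar>L\<bar> + 1) * \<bar>poly q x\<bar>"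
  proof eventually_elim
    case (elim x)
    hence "\<bar>poly f x\<bar> / \<bar>poly q x\<bar> \<le> \<bar>L\<bar> + 1" by (auto simp: dist_real_def abs_divide)
    thus ?case using elim by (simp add: divide_le_eq)
  qed
  thus ?thesis unfolding eventually_at_infinity by auto
qed

lemma pderiv_decomp:
  fixes r :: "real poly"
  shows "pderiv ([:c,1:]^Suc n * r) = [:c,1:]^n * ([:c,1:] * pderiv r + smult (of_nat (Suc n)) r)"
proof -
  have "pderiv ([:c,1:]^Suc n * r) = [:c,1:]^Suc n * pderiv r + r * (smult (of_nat (Suc n)) ([:c,1:]^n) * pderiv [:c,1:])"
    by (simp only: pderiv_mult pderiv_power_Suc)
  also have "pderiv [:c,1:] = 1" by (simp add: pderiv_pCons)
  finally show ?thesis by (simp add: algebra_simps)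
qed

lemma local_nonzero_root:
  fixes p :: "real poly"
  assumes p0: "p \<noteq> 0" and pa: "poly p a = 0" and p1a: "poly (pderiv p) a = 0" and a0: "a \<noteq> 0"
  shows "\<exists>e>0. \<exists>B. \<forall>x. \<bar>x - a\<bar> < e \<longrightarrow>
     \<bar>x^2 * poly (pderiv (pderiv p)) x * poly p x\<bar> \<le> B * ((poly p x)^2 + x^2 * (poly (pderiv p) x)^2)"
proof -
  define k where "k = order a p"
  obtain r where r: "p = [:-a,1:]^k * r" "\<not> [:-a,1:] dvd r"
    using order_decomp[OF p0] unfolding k_def by blast
  have ra: "poly r a \<noteq> 0" using r(2) by (simp add: poly_eq_0_iff_dvd)
  have "k \<noteq> 0" using pa p0 order_root unfolding k_def by blast
  moreover have "k \<noteq> 1"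
  proof
    assume "k = 1"
    hence "pderiv p = [:-a,1:] * pderiv r + r" using r(1) pderiv_decomp[of "-a" 0 r] by simp
    hence "poly (pderiv p) a = poly r a" by simp
    thus False using p1a ra by simp
  qed
  ultimately obtain m where k: "k = Suc (Suc m)" by (metis One_nat_def not0_implies_Suc)
  define s where "s = [:-a,1:] * pderiv r + smult (of_nat k) r"
  have p1: "pderiv p = [:-a,1:]^Suc m * s" using r(1) pderiv_decomp[of "-a" "Suc m" r] unfolding k s_def by simp
  have p2: "pderiv (pderiv p) = [:-a,1:]^m * ([:-a,1:] * pderiv s + smult (of_nat (Suc m)) s)"
    unfolding p1 by (rule pderiv_decomp)
  define F where "F x = x^2 * ((x - a) * poly (pderiv s) x + of_nat (Suc m) * poly s x) * poly r x" for x
  define G where "G x = (x - a)^2 * (poly r x)^2 + x^2 * (poly s x)^2" for x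
  have sa: "poly s a = of_nat k * poly r a" unfolding s_def by simp
  have Ga: "G a > 0" unfolding G_def using sa ra a0 k by simp
  have cF: "isCont F a" unfolding F_def by (intro continuous_intros)
  have cG: "isCont G a" unfolding G_def by (intro continuous_intros)
  obtain e B where e: "e > 0" and B: "\<And>x. \<bar>x - a\<bar> < e \<Longrightarrow> \<bar>F x\<bar> \<le> B * G x"
    using loc_bound[OF cF cG Ga] by blast
  have l: "poly [:-a,1:] x = x - a" for x by simp
  have ev0: "poly p x = (x - a)^m * ((x - a)^2 * poly r x)" for x
  proof -
    show ?thesis unfolding r(1) k poly_mult poly_power l power_Suc by (simp only: power2_eq_square mult_ac)
  qed
  have ev1: "poly (pderiv p) x = (x - a)^m * ((x - a) * poly s x)" for x
    unfolding p1 poly_mult poly_power l power_Suc by (simp only: mult_ac)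
  have ev2: "poly (pderiv (pderiv p)) x = (x - a)^m * ((x - a) * poly (pderiv s) x + of_nat (Suc m) * poly s x)" for x
    unfolding p2 poly_mult poly_add poly_smult poly_power l by (simp only: mult_ac)
  have pw: "(x - a)^(2*m+2) = ((x - a)^m)^2 * (x - a)^2" for x :: real
  proof -
    have e: "2*m+2 = m + m + 2" by simp
    show ?thesis by (subst e) (simp only: power_add power2_eq_square)
  qed
  have eqf: "x^2 * poly (pderiv (pderiv p)) x * poly p x = (x - a)^(2*m+2) * F x" for x
    unfolding ev0 ev2 pw F_def by (simp add: power2_eq_square mult_ac)
  have eqg: "(poly p x)^2 + x^2 * (poly (pderiv p) x)^2 = (x - a)^(2*m+2) * G x" for x
    unfolding ev0 ev1 pw G_def by (simp add: power2_eq_square algebra_simps)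
  have "\<bar>x^2 * poly (pderiv (pderiv p)) x * poly p x\<bar> \<le> B * ((poly p x)^2 + x^2 * (poly (pderiv p) x)^2)"
    if x: "\<bar>x - a\<bar> < e" for x
  proof -
    have nn: "(x - a)^(2*m+2) \<ge> 0" unfolding pw by simp
    have "\<bar>(x - a)^(2*m+2) * F x\<bar> = (x - a)^(2*m+2) * \<bar>F x\<bar>" using nn by (simp add: abs_mult)
    also have "\<dots> \<le> (x - a)^(2*m+2) * (B * G x)" using B[OF x] nn by (rule mult_left_mono)
    finally show ?thesis unfolding eqf eqg by (simp add: algebra_simps)
  qed
  thus ?thesis using e by blast
qed

lemma local_zero_root:
  fixes p :: "real poly"
  assumes p0: "p \<noteq> 0" and pa: "poly p 0 = 0"
  shows "\<exists>e>0. \<exists>B. \<forall>x. \<bar>x - 0\<bar> < e \<longrightarrow>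
     \<bar>x^2 * poly (pderiv (pderiv p)) x * poly p x\<bar> \<le> B * ((poly p x)^2 + x^2 * (poly (pderiv p) x)^2)"
proof -
  define k where "k = order 0 p"
  obtain r where r: "p = [:-0,1:]^k * r" "\<not> [:-0,1:] dvd r"
    using order_decomp[OF p0] unfolding k_def by blast
  have ra: "poly r 0 \<noteq> 0" using r(2) by (simp add: poly_eq_0_iff_dvd)
  have "k \<noteq> 0" using pa p0 order_root unfolding k_def by blast
  then obtain m where k: "k = Suc m" by (metis not0_implies_Suc)
  define s where "s = [:-0,1:] * pderiv r + smult (of_nat k) r"
  have p1: "pderiv p = [:-0,1:]^m * s" using r(1) pderiv_decomp[of "-0" "m" r] unfolding k s_def by simp
  have l: "poly [:-0,1:] x = x" for x :: real by simp
  have ev0: "poly p x = x^m * (x * poly r x)" for x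
    unfolding r(1) k poly_mult poly_power l power_Suc by (simp only: mult_ac)
  have ev1: "poly (pderiv p) x = x^m * poly s x" for x
    unfolding p1 poly_mult poly_power l by (simp only: mult_ac)
  have ev2: "x * poly (pderiv (pderiv p)) x = x^m * (x * poly (pderiv s) x + of_nat m * poly s x)" for x
  proof (cases m)
    case 0
    then show ?thesis unfolding p1 by simp
  next
    case (Suc m')
    have "pderiv (pderiv p) = [:-0,1:]^m' * ([:-0,1:] * pderiv s + smult (of_nat (Suc m')) s)"
      unfolding p1 Suc by (rule pderiv_decomp)
    hence "poly (pderiv (pderiv p)) x = x^m' * (x * poly (pderiv s) x + of_nat (Suc m') * poly s x)"
      by (simp only: poly_mult poly_add poly_smult poly_power l)
    thus ?thesis unfolding Suc by (simp only: power_Suc mult_ac)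
  qed
  define F where "F x = (x * poly (pderiv s) x + of_nat m * poly s x) * poly r x" for x
  define G where "G x = (poly r x)^2 + (poly s x)^2" for x
  have sa: "poly s 0 = of_nat k * poly r 0" unfolding s_def by simp
  have Ga: "G 0 > 0" unfolding G_def using ra by (simp add: add_pos_nonneg)
  have cF: "isCont F 0" unfolding F_def by (intro continuous_intros)
  have cG: "isCont G 0" unfolding G_def by (intro continuous_intros)
  obtain e B where e: "e > 0" and B: "\<And>x. \<bar>x - 0\<bar> < e \<Longrightarrow> \<bar>F x\<bar> \<le> B * G x"
    using loc_bound[OF cF cG Ga] by blast
  have pw: "x^(2*m+2) = (x^m)^2 * x^2" for x :: real
  proof -
    have e: "2*m+2 = m + m + 2" by simp
    show ?thesis by (subst e) (simp only: power_add power2_eq_square)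
  qed
  have eqf: "x^2 * poly (pderiv (pderiv p)) x * poly p x = x^(2*m+2) * F x" for x
  proof -
    have "x^2 * poly (pderiv (pderiv p)) x * poly p x = x * (x * poly (pderiv (pderiv p)) x) * poly p x"
      by (simp add: power2_eq_square)
    also have "\<dots> = x^(2*m+2) * F x" unfolding ev2 ev0 pw F_def by (simp add: power2_eq_square mult_ac)
    finally show ?thesis .
  qed
  have eqg: "(poly p x)^2 + x^2 * (poly (pderiv p) x)^2 = x^(2*m+2) * G x" for x
    unfolding ev0 ev1 pw G_def by (simp add: power2_eq_square algebra_simps)
  have "\<bar>x^2 * poly (pderiv (pderiv p)) x * poly p x\<bar> \<le> B * ((poly p x)^2 + x^2 * (poly (pderiv p) x)^2)"
    if x: "\<bar>x - 0\<bar> < e" for x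
  proof -
    have nn: "x^(2*m+2) \<ge> 0" unfolding pw by simp
    have "\<bar>x^(2*m+2) * F x\<bar> = x^(2*m+2) * \<bar>F x\<bar>" using nn by (simp add: abs_mult)
    also have "\<dots> \<le> x^(2*m+2) * (B * G x)" using B[OF x] nn by (rule mult_left_mono)
    finally show ?thesis unfolding eqf eqg by (simp add: algebra_simps)
  qed
  thus ?thesis using e by blast
qed

lemma star:
  fixes p :: "real poly"
  assumes p0: "p \<noteq> 0"
  shows "\<exists>A>0. \<forall>x. \<bar>x^2 * poly (pderiv (pderiv p)) x * poly p x\<bar> \<le> A * ((poly p x)^2 + x^2 * (poly (pderiv p) x)^2)"
proof -
  define Ff where "Ff x = x^2 * poly (pderiv (pderiv p)) x * poly p x" for x
  define Gf where "Gf x = (poly p x)^2 + x^2 * (poly (pderiv p) x)^2" for x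
  have Gnn: "Gf x \<ge> 0" for x unfolding Gf_def by simp
  have loc: "\<exists>e>0. \<exists>B. \<forall>x. \<bar>x - a\<bar> < e \<longrightarrow> \<bar>Ff x\<bar> \<le> B * Gf x" for a
  proof (cases "Gf a > 0")
    case True
    show ?thesis by (rule loc_bound) (use True in \<open>auto simp: Ff_def Gf_def intro!: continuous_intros\<close>)
  next
    case False
    hence "Gf a = 0" using Gnn[of a] by simp
    hence pa: "poly p a = 0" and "a^2 * (poly (pderiv p) a)^2 = 0" unfolding Gf_def
      by (simp_all add: add_nonneg_eq_0_iff)
    hence "a = 0 \<or> poly (pderiv p) a = 0" by simp
    then show ?thesis
    proof
      assume a: "a = 0"
      show ?thesis using local_zero_root[OF p0] pa unfolding a Ff_def Gf_def by simp
    next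
      assume p1a: "poly (pderiv p) a = 0"
      show ?thesis
      proof (cases "a = 0")
        case True
        show ?thesis using local_zero_root[OF p0] pa unfolding True Ff_def Gf_def by simp
      next
        case False
        show ?thesis using local_nonzero_root[OF p0 pa p1a False] unfolding Ff_def Gf_def by simp
      qed
    qed
  qed
  obtain E BB where E: "\<And>a. E a > 0" and BB: "\<And>a x. \<bar>x - a\<bar> < E a \<Longrightarrow> \<bar>Ff x\<bar> \<le> BB a * Gf x"
    using loc by metis
  define f where "f = [:0,0,1:] * pderiv (pderiv p) * p"
  have pf: "poly f x = Ff x" for x unfolding f_def Ff_def by (simp add: power2_eq_square)
  have degf: "degree f \<le> degree (p * p)"
  proof (cases "degree p < 2")
    case True
    hence "degree (pderiv p) = 0" by (simp add: degree_pderiv)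
    hence "pderiv (pderiv p) = 0" by (simp add: pderiv_eq_0_iff)
    thus ?thesis unfolding f_def by simp
  next
    case False
    have "degree f \<le> degree ([:0,0,1:] * pderiv (pderiv p)) + degree p" unfolding f_def by (rule degree_mult_le)
    also have "\<dots> \<le> (2 + degree (pderiv (pderiv p))) + degree p"
      using degree_mult_le[of "[:0,0,1::real:]" "pderiv (pderiv p)"] by simp
    also have "\<dots> = degree p + degree p" using False by (simp add: degree_pderiv)
    also have "\<dots> = degree (p * p)" using p0 by (simp add: degree_mult_eq)
    finally show ?thesis .
  qed
  have "p * p \<noteq> 0" using p0 by simp
  from inf_bound[OF this degf] obtain R B0 where
    RB: "\<And>x. R \<le> \<bar>x\<bar> \<Longrightarrow> \<bar>poly f x\<bar> \<le> B0 * \<bar>poly (p * p) x\<bar>" by blast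
  obtain K where K: "K \<subseteq> cball 0 R" "finite K" "cball 0 R \<subseteq> (\<Union>a\<in>K. ball a (E a))"
    by (rule compactE_image[of "cball 0 R" "cball 0 R" "\<lambda>a. ball a (E a)"]) (auto simp: E)
  define A where "A = 1 + max B0 0 + (\<Sum>a\<in>K. \<bar>BB a\<bar>)"
  have sum_nn: "(\<Sum>a\<in>K. \<bar>BB a\<bar>) \<ge> 0" by (rule sum_nonneg) simp
  have Apos: "A > 0" unfolding A_def using sum_nn max.cobounded2[of 0 B0] by linarith
  have "\<bar>Ff x\<bar> \<le> A * Gf x" for x
  proof (cases "R \<le> \<bar>x\<bar>")
    case True
    have "\<bar>Ff x\<bar> \<le> B0 * \<bar>poly (p * p) x\<bar>" using RB[OF True] pf by simp
    also have "\<dots> \<le> max B0 0 * \<bar>poly (p * p) x\<bar>" by (rule mult_right_mono) auto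
    also have "\<dots> \<le> max B0 0 * Gf x" by (rule mult_left_mono) (auto simp: Gf_def power2_eq_square)
    also have "\<dots> \<le> A * Gf x"
      by (rule mult_right_mono[OF _ Gnn]) (unfold A_def, use sum_nn in linarith)
    finally show ?thesis .
  next
    case False
    hence "x \<in> cball 0 R" by simp
    then obtain a where a: "a \<in> K" "x \<in> ball a (E a)" using K(3) by blast
    have "\<bar>x - a\<bar> < E a" using a(2) by (simp add: dist_real_def abs_minus_commute)
    hence "\<bar>Ff x\<bar> \<le> BB a * Gf x" by (rule BB)
    also have "\<dots> \<le> A * Gf x"
    proof (rule mult_right_mono)
      have "BB a \<le> \<bar>BB a\<bar>" by simp
      also have "\<dots> \<le> (\<Sum>a\<in>K. \<bar>BB a\<bar>)" by (rule member_le_sum) (use a K in auto)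
      finally show "BB a \<le> A" unfolding A_def by simp
    qed (rule Gnn)
    finally show ?thesis .
  qed
  thus ?thesis using Apos unfolding Ff_def Gf_def by blast
qed

lemma lip_lower:
  fixes f f' :: "real \<Rightarrow> real"
  assumes t: "0 \<le> t" and d: "\<And>\<theta>. 0 \<le> \<theta> \<Longrightarrow> \<theta> \<le> t \<Longrightarrow> DERIV f \<theta> :> f' \<theta>"
    and b: "\<And>\<theta>. 0 \<le> \<theta> \<Longrightarrow> \<theta> \<le> t \<Longrightarrow> \<bar>f' \<theta>\<bar> \<le> L"
  shows "f t \<ge> f 0 - L * t"
proof (cases "t = 0")
  case True then show ?thesis by simp
next
  case False
  hence "0 < t" using t by simp
  from MVT2[OF this d] obtain z where z: "0 < z" "z < t" "f t - f 0 = (t - 0) * f' z" by auto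
  have "\<bar>f' z\<bar> \<le> L" using b z by simp
  hence "- L \<le> f' z" using abs_ge_minus_self[of "f' z"] by linarith
  hence "t * (- L) \<le> t * f' z" using \<open>0 < t\<close> by (intro mult_left_mono) auto
  moreover have "f t - f 0 = t * f' z" using z(3) by simp
  moreover have "t * (- L) = - (L * t)" by simp
  ultimately show ?thesis by linarith
qed

lemma alg1: fixes w u c :: real assumes "w > 0" "w^2 = c"
  shows "- (1 / w / 2 * (2 * u) * (1 / w ^ Suc (Suc 0))) = - u / (c * w)"
  using assms by (auto simp: field_simps power2_eq_square)

lemma phi_deriv:
  "((\<lambda>u::real. 1 / sqrt (1 + u^2)) has_real_derivative (- u / ((1 + u^2) * sqrt (1 + u^2)))) (at u)"
proof -
  have pos: "1 + u^2 > 0" by (simp add: add_pos_nonneg)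
  have d1: "((\<lambda>x. 1 + x^2) has_real_derivative 2*u) (at u)" by (auto intro!: derivative_eq_intros)
  have d2: "((\<lambda>x. sqrt (1 + x^2)) has_real_derivative (inverse (sqrt (1+u^2)) / 2 * (2*u))) (at u)"
    using DERIV_chain2[OF DERIV_real_sqrt[OF pos] d1] .
  have sq: "sqrt (1 + u^2) > 0" using pos by simp
  have d3: "((\<lambda>x. inverse (sqrt (1 + x^2))) has_real_derivative 
     (- (inverse (sqrt (1+u^2)) / 2 * (2*u) * inverse ((sqrt (1 + u^2))^Suc (Suc 0))))) (at u)"
    by (rule DERIV_inverse_fun[OF d2]) (use sq in linarith)
  have w2: "(sqrt (1 + u^2))^2 = 1 + u^2" using pos by simp
  show ?thesis using d3 unfolding inverse_eq_divide alg1[OF sq w2] .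
qed

lemma alg2:
  fixes a b c d S :: real assumes "c \<noteq> 0"
  shows "((a * S * b + a * S * d * a) * c - a * b * (a * S * b)) / (c * c) = S * (a * b / c + a^2 * d / c - (a * b / c)^2)"
  using assms by (simp add: field_simps power2_eq_square)

lemma alg3:
  fixes a b c d A :: real assumes "c \<noteq> 0" "\<bar>a^2 * d * c\<bar> \<le> A * (c^2 + a^2 * b^2)"
  shows "\<bar>a^2 * d / c\<bar> \<le> A * (1 + (a * b / c)^2)"
proof -
  have c2: "c^2 > 0" using assms(1) by simp
  have "\<bar>a^2 * d / c\<bar> = \<bar>a^2 * d * c\<bar> / c^2" using assms(1) by (simp add: abs_mult power2_eq_square field_simps)
  also have "\<dots> \<le> A * (c^2 + a^2 * b^2) / c^2" using assms(2) c2 by (simp add: divide_right_mono)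
  also have "\<dots> = A * (1 + (a * b / c)^2)" using assms(1) by (simp add: field_simps power2_eq_square)
  finally show ?thesis .
qed

lemma alg4:
  fixes u D K :: real assumes "0 \<le> K" "\<bar>D\<bar> \<le> K * (1 + u^2)"
  shows "\<bar>- u / ((1 + u^2) * sqrt (1 + u^2)) * D\<bar> \<le> K"
proof -
  define w where "w = sqrt (1 + u^2)"
  have pos: "1 + u^2 > 0" by (simp add: add_pos_nonneg)
  have w: "w > 0" "w^2 = 1 + u^2" unfolding w_def using pos by simp_all
  have uw: "\<bar>u\<bar> \<le> w" unfolding w_def real_sqrt_abs[symmetric] by (rule real_sqrt_le_mono) simp
  have "\<bar>- u / ((1 + u^2) * w) * D\<bar> = \<bar>u\<bar> * \<bar>D\<bar> / ((1 + u^2) * w)"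
    using w pos by (simp add: abs_mult abs_divide)
  also have "\<dots> \<le> w * (K * (1 + u^2)) / ((1 + u^2) * w)"
    using w pos uw assms by (intro divide_right_mono mult_mono) auto
  also have "\<dots> = K" using w pos by simp
  finally show ?thesis unfolding w_def .
qed

lemma abs_sq_aux:
  fixes u :: real shows "(1 + \<bar>u\<bar>)^2 \<le> 4 * (1 + u^2)" and "2 * \<bar>u\<bar> \<le> 1 + u^2"
    and "(1 + \<bar>u\<bar>)^2 = 1 + 2 * \<bar>u\<bar> + u^2"
proof -
  have a: "\<bar>u\<bar> * \<bar>u\<bar> = u * u" by (rule abs_mult_self_eq)
  have "0 \<le> (\<bar>u\<bar> - 1)^2" by simp
  also have "(\<bar>u\<bar> - 1)^2 = u^2 - 2 * \<bar>u\<bar> + 1" unfolding power2_eq_square using a by (simp add: algebra_simps)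
  finally show b: "2 * \<bar>u\<bar> \<le> 1 + u^2" by linarith
  show c: "(1 + \<bar>u\<bar>)^2 = 1 + 2 * \<bar>u\<bar> + u^2" unfolding power2_eq_square using a by (simp add: algebra_simps)
  have "1 + 2 * \<bar>u\<bar> + u^2 \<le> 4 * (1 + u^2)" using b by simp
  thus "(1 + \<bar>u\<bar>)^2 \<le> 4 * (1 + u^2)" unfolding c .
qed

lemma alg5:
  fixes u m :: real assumes "m > 0" "1 / sqrt (1 + u^2) \<ge> 1 / (2 * m)"
  shows "1 + \<bar>u\<bar> \<le> 4 * m"
proof -
  define w where "w = sqrt (1 + u^2)"
  have pos: "1 + u^2 > 0" by (simp add: add_pos_nonneg)
  have w: "w > 0" "w^2 = 1 + u^2" unfolding w_def using pos by simp_all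
  have a2: "1 / (2 * m) \<le> 1 / w" using assms(2) unfolding w_def[symmetric] .
  have "w \<le> 2 * m"
  proof (rule ccontr)
    assume "\<not> w \<le> 2 * m"
    hence "2 * m < w" by simp
    hence "1 / w < 1 / (2 * m)" using assms(1) w(1) by (intro divide_strict_left_mono) auto
    thus False using a2 by linarith
  qed
  moreover have "(2 * w)^2 = 4 * (1 + u^2)" unfolding power_mult_distrib w(2) by simp
  hence "(1 + \<bar>u\<bar>)^2 \<le> (2 * w)^2" using abs_sq_aux(1)[of u] by simp
  hence "1 + \<bar>u\<bar> \<le> 2 * w" by (rule power2_le_imp_le) (use w in simp)
  ultimately show ?thesis by linarith
qed

lemma alg6:
  fixes u :: real shows "sqrt (1 + u^2) \<le> 1 + \<bar>u\<bar>"
proof (rule real_le_lsqrt)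
  show "1 + u^2 \<le> (1 + \<bar>u\<bar>)^2" unfolding abs_sq_aux(3) by simp
qed simp_all

lemma path_lemma:
  fixes p :: "real poly" and x S A :: real
  assumes Ab: "\<And>z. \<bar>z^2 * poly (pderiv (pderiv p)) z * poly p z\<bar> \<le> A * ((poly p z)^2 + z^2 * (poly (pderiv p) z)^2)"
    and A0: "A > 0"
    and x0: "x \<noteq> 0" and px: "poly p x \<noteq> 0"
    and S1: "\<bar>S\<bar> * (A + 2) * (1 + \<bar>x * poly (pderiv p) x / poly p x\<bar>) \<le> 1/2"
    and S2: "\<bar>S\<bar> * (1 + \<bar>x * poly (pderiv p) x / poly p x\<bar>) \<le> 1/4"
  shows "poly p (x * exp S) \<noteq> 0 \<and>
    1 + \<bar>x * exp S * poly (pderiv p) (x * exp S) / poly p (x * exp S)\<bar> \<le> 4 * (1 + \<bar>x * poly (pderiv p) x / poly p x\<bar>)"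
proof -
  define P where "P = poly p"
  define P1 where "P1 = poly (pderiv p)"
  define P2 where "P2 = poly (pderiv (pderiv p))"
  define \<mu> where "\<mu> = 1 + \<bar>x * P1 x / P x\<bar>"
  have mu1: "\<mu> \<ge> 1" unfolding \<mu>_def by simp
  define g where "g \<theta> = x * exp (\<theta> * S)" for \<theta>
  define H where "H \<theta> = g \<theta> * P1 (g \<theta>) / P (g \<theta>)" for \<theta>
  define Q where "Q \<theta> = 1 / sqrt (1 + (H \<theta>)^2)" for \<theta>
  define Hd where "Hd \<theta> = S * (H \<theta> + (g \<theta>)^2 * P2 (g \<theta>) / P (g \<theta>) - (H \<theta>)^2)" for \<theta>
  have g0: "g 0 = x" unfolding g_def by simp
  have H0: "\<mu> = 1 + \<bar>H 0\<bar>" unfolding \<mu>_def H_def g0 ..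
  have dg: "(g has_real_derivative g \<theta> * S) (at \<theta>)" for \<theta>
    unfolding g_def by (auto intro!: derivative_eq_intros)
  have dP: "((\<lambda>\<theta>. P (g \<theta>)) has_real_derivative g \<theta> * S * P1 (g \<theta>)) (at \<theta>)" for \<theta>
    unfolding P_def P1_def by (rule has_field_derivative_poly[OF dg])
  have dP1: "((\<lambda>\<theta>. P1 (g \<theta>)) has_real_derivative g \<theta> * S * P2 (g \<theta>)) (at \<theta>)" for \<theta>
    unfolding P1_def P2_def by (rule has_field_derivative_poly[OF dg])
  have dH: "(H has_real_derivative Hd \<theta>) (at \<theta>)" if nz: "P (g \<theta>) \<noteq> 0" for \<theta>
  proof -
    have "((\<lambda>\<theta>. g \<theta> * P1 (g \<theta>) / P (g \<theta>)) has_real_derivative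
        ((g \<theta> * S * P1 (g \<theta>) + g \<theta> * S * P2 (g \<theta>) * g \<theta>) * P (g \<theta>) - g \<theta> * P1 (g \<theta>) * (g \<theta> * S * P1 (g \<theta>))) / (P (g \<theta>) * P (g \<theta>))) (at \<theta>)"
      by (rule DERIV_divide[OF DERIV_mult[OF dg dP1] dP nz])
    moreover have "((g \<theta> * S * P1 (g \<theta>) + g \<theta> * S * P2 (g \<theta>) * g \<theta>) * P (g \<theta>) - g \<theta> * P1 (g \<theta>) * (g \<theta> * S * P1 (g \<theta>))) / (P (g \<theta>) * P (g \<theta>)) = Hd \<theta>"
      unfolding Hd_def H_def by (rule alg2[OF nz])
    ultimately show ?thesis unfolding H_def by simp
  qed
  have Hd_bound: "\<bar>Hd \<theta>\<bar> \<le> \<bar>S\<bar> * (A + 2) * (1 + (H \<theta>)^2)" if nz: "P (g \<theta>) \<noteq> 0" for \<theta>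
  proof -
    have t: "\<bar>(g \<theta>)^2 * P2 (g \<theta>) / P (g \<theta>)\<bar> \<le> A * (1 + (H \<theta>)^2)"
      unfolding H_def by (rule alg3[OF nz]) (use Ab[of "g \<theta>"] in \<open>simp add: P_def P1_def P2_def\<close>)
    have u: "2 * \<bar>H \<theta>\<bar> \<le> 1 + (H \<theta>)^2" by (rule abs_sq_aux(2))
    have "\<bar>H \<theta> + (g \<theta>)^2 * P2 (g \<theta>) / P (g \<theta>) - (H \<theta>)^2\<bar> \<le> \<bar>H \<theta>\<bar> + \<bar>(g \<theta>)^2 * P2 (g \<theta>) / P (g \<theta>)\<bar> + (H \<theta>)^2"
      by (smt (verit) abs_triangle_ineq4 abs_triangle_ineq zero_le_power2 abs_of_nonneg)
    also have "\<dots> \<le> (A + 2) * (1 + (H \<theta>)^2)" using t u by (simp add: algebra_simps)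
    finally have "\<bar>H \<theta> + (g \<theta>)^2 * P2 (g \<theta>) / P (g \<theta>) - (H \<theta>)^2\<bar> \<le> (A + 2) * (1 + (H \<theta>)^2)" .
    hence "\<bar>S\<bar> * \<bar>H \<theta> + (g \<theta>)^2 * P2 (g \<theta>) / P (g \<theta>) - (H \<theta>)^2\<bar> \<le> \<bar>S\<bar> * ((A + 2) * (1 + (H \<theta>)^2))"
      by (rule mult_left_mono) simp
    thus ?thesis unfolding Hd_def by (simp add: abs_mult mult.assoc)
  qed
  define Qd where "Qd \<theta> = - H \<theta> / ((1 + (H \<theta>)^2) * sqrt (1 + (H \<theta>)^2)) * Hd \<theta>" for \<theta>
  have dQ: "(Q has_real_derivative Qd \<theta>) (at \<theta>)" if nz: "P (g \<theta>) \<noteq> 0" for \<theta>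
    unfolding Q_def Qd_def by (rule DERIV_chain2[OF phi_deriv dH[OF nz]])
  have Qd_bound: "\<bar>Qd \<theta>\<bar> \<le> \<bar>S\<bar> * (A + 2)" if nz: "P (g \<theta>) \<noteq> 0" for \<theta>
    unfolding Qd_def by (rule alg4) (use A0 Hd_bound[OF nz] in auto)
  have Q0: "Q 0 \<ge> 1 / \<mu>"
  proof -
    have "sqrt (1 + (H 0)^2) \<le> \<mu>" unfolding H0 by (rule alg6)
    moreover have "sqrt (1 + (H 0)^2) > 0" by (simp add: add_pos_nonneg)
    ultimately show ?thesis unfolding Q_def using mu1 by (intro divide_left_mono) (auto intro: mult_pos_pos)
  qed
  have step2: "1 + \<bar>H t\<bar> \<le> 4 * \<mu>"
    if t: "0 \<le> t" "t \<le> 1" and rf: "\<And>\<theta>. 0 \<le> \<theta> \<Longrightarrow> \<theta> \<le> t \<Longrightarrow> P (g \<theta>) \<noteq> 0" for t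
  proof -
    have "Q t \<ge> Q 0 - (\<bar>S\<bar> * (A + 2)) * t"
      by (rule lip_lower[OF t(1)]) (use dQ Qd_bound rf in auto)
    moreover have "(\<bar>S\<bar> * (A + 2)) * t \<le> \<bar>S\<bar> * (A + 2)"
      using t A0 by (simp add: mult_left_le)
    moreover have "\<bar>S\<bar> * (A + 2) \<le> 1 / (2 * \<mu>)"
    proof -
      have s1': "\<bar>S\<bar> * (A + 2) * \<mu> \<le> 1/2" using S1 unfolding \<mu>_def P_def P1_def .
      have "\<bar>S\<bar> * (A + 2) * (2 * \<mu>) = 2 * (\<bar>S\<bar> * (A + 2) * \<mu>)" by simp
      hence "\<bar>S\<bar> * (A + 2) * (2 * \<mu>) \<le> 1" using s1' by linarith
      thus ?thesis using mu1 by (subst pos_le_divide_eq) auto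
    qed
    ultimately have "Q t \<ge> 1 / \<mu> - 1 / (2 * \<mu>)" using Q0 by linarith
    moreover have "1 / \<mu> - 1 / (2 * \<mu>) = 1 / (2 * \<mu>)" using mu1 by (simp add: field_simps)
    ultimately have "1 / sqrt (1 + (H t)^2) \<ge> 1 / (2 * \<mu>)" unfolding Q_def by simp
    thus ?thesis using mu1 by (intro alg5) auto
  qed
  have alg7: "inverse (c^2) * (of_nat 2 * (a * S * b * c ^ (2 - Suc 0))) = 2 * S * (a * b / c)"
    if "c \<noteq> 0" for a b c :: real
    using that by (simp add: field_simps power2_eq_square)
  define Lg where "Lg \<theta> = ln ((P (g \<theta>))^2)" for \<theta>
  have dL: "(Lg has_real_derivative 2 * S * H \<theta>) (at \<theta>)" if nz: "P (g \<theta>) \<noteq> 0" for \<theta>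
  proof -
    have pos: "0 < (P (g \<theta>))^2" using nz by simp
    have "(Lg has_real_derivative inverse ((P (g \<theta>))^2) * (of_nat 2 * (g \<theta> * S * P1 (g \<theta>) * P (g \<theta>) ^ (2 - Suc 0)))) (at \<theta>)"
      unfolding Lg_def by (rule DERIV_chain2[OF DERIV_ln[OF pos] DERIV_power[OF dP]])
    thus ?thesis unfolding alg7[OF nz] H_def .
  qed
  have step3: "(P (g t))^2 \<ge> (P x)^2 * exp (-2)"
    if t: "0 \<le> t" "t \<le> 1" and rf: "\<And>\<theta>. 0 \<le> \<theta> \<Longrightarrow> \<theta> \<le> t \<Longrightarrow> P (g \<theta>) \<noteq> 0" for t
  proof -
    have bd: "\<bar>2 * S * H \<theta>\<bar> \<le> 2" if th: "0 \<le> \<theta>" "\<theta> \<le> t" for \<theta>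
    proof -
      have "1 + \<bar>H \<theta>\<bar> \<le> 4 * \<mu>" by (rule step2) (use th t rf in auto)
      hence "\<bar>H \<theta>\<bar> \<le> 4 * \<mu>" by linarith
      hence "\<bar>S\<bar> * \<bar>H \<theta>\<bar> \<le> \<bar>S\<bar> * (4 * \<mu>)" by (rule mult_left_mono) simp
      moreover have "\<bar>S\<bar> * \<mu> \<le> 1/4" using S2 unfolding \<mu>_def P_def P1_def .
      ultimately have "\<bar>S\<bar> * \<bar>H \<theta>\<bar> \<le> 1" by linarith
      thus ?thesis by (simp add: abs_mult)
    qed
    have "Lg t \<ge> Lg 0 - 2 * t"
      by (rule lip_lower[OF t(1)]) (use dL bd rf in auto)
    hence "Lg t \<ge> Lg 0 - 2" using t by linarith
    hence "exp (Lg t) \<ge> exp (Lg 0 - 2)" by simp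
    moreover have "exp (Lg t) = (P (g t))^2" unfolding Lg_def using rf[of t] t by simp
    moreover have "exp (Lg 0 - 2) = (P x)^2 * exp (-2)" unfolding Lg_def g0 using px
      by (simp add: exp_diff P_def divide_inverse exp_minus)
    ultimately show ?thesis by simp
  qed
  define Z where "Z = {0..1} \<inter> (\<lambda>\<theta>. P (g \<theta>)) -` {0}"
  have contPg: "continuous_on UNIV (\<lambda>\<theta>. P (g \<theta>))" unfolding P_def g_def
    by (intro continuous_intros)
  have Zempty: "Z = {}"
  proof (rule ccontr)
    assume ne: "Z \<noteq> {}"
    have clZ: "closed Z" unfolding Z_def
      by (intro closed_Int closed_atLeastAtMost closed_vimage contPg closed_singleton)
    have bbZ: "bdd_below Z" unfolding Z_def by (rule bdd_belowI[of _ 0]) auto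
    define ts where "ts = Inf Z"
    have tsZ: "ts \<in> Z" unfolding ts_def by (rule closed_contains_Inf[OF ne bbZ clZ])
    have low: "ts \<le> \<theta>" if "\<theta> \<in> Z" for \<theta> unfolding ts_def by (rule cInf_lower[OF that bbZ])
    have ts01: "0 \<le> ts" "ts \<le> 1" using tsZ unfolding Z_def by auto
    have "ts \<noteq> 0" using tsZ px g0 unfolding Z_def P_def by auto
    hence tspos: "0 < ts" using ts01 by simp
    have ge: "(P (g t))^2 \<ge> (P x)^2 * exp (-2)" if "t \<in> {0..<ts}" for t
    proof (rule step3)
      show "0 \<le> t" "t \<le> 1" using that ts01 by auto
      fix \<theta> assume th: "0 \<le> \<theta>" "\<theta> \<le> t"
      show "P (g \<theta>) \<noteq> 0"
      proof
        assume "P (g \<theta>) = 0"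
        hence "\<theta> \<in> Z" unfolding Z_def using th that ts01 by auto
        hence "ts \<le> \<theta>" by (rule low)
        thus False using th that by auto
      qed
    qed
    have "(P (g ts))^2 \<ge> (P x)^2 * exp (-2)"
    proof (rule continuous_ge_on_closure[of "{0..<ts}" "\<lambda>t. (P (g t))^2"])
      show "continuous_on (closure {0..<ts}) (\<lambda>t. (P (g t))^2)"
        by (intro continuous_intros continuous_on_subset[OF contPg]) auto
      show "ts \<in> closure {0..<ts}" using tspos by simp
    qed (rule ge)
    moreover have "(P x)^2 * exp (-2) > 0" using px unfolding P_def by simp
    moreover have "P (g ts) = 0" using tsZ unfolding Z_def by simp
    ultimately show False by simp
  qed
  have rf1: "P (g \<theta>) \<noteq> 0" if "0 \<le> \<theta>" "\<theta> \<le> 1" for \<theta>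
    using Zempty that unfolding Z_def by auto
  have "1 + \<bar>H 1\<bar> \<le> 4 * \<mu>" by (rule step2) (use rf1 in auto)
  moreover have "P (g 1) \<noteq> 0" by (rule rf1) auto
  moreover have "g 1 = x * exp S" unfolding g_def by simp
  ultimately show ?thesis unfolding H_def \<mu>_def P_def P1_def by simp
qed

lemma deriv_poly_eq: "deriv (poly p) z = poly (pderiv p) (z::real)"
  by (rule DERIV_imp_deriv[OF poly_DERIV])

lemma one_div_ereal: assumes "r \<noteq> 0" shows "1 / ereal r = ereal (1 / r)"
  unfolding divide_ereal_def using assms by (simp add: inverse_eq_divide)

theorem mainTheorem6:
  fixes p :: "real poly"
  assumes "p \<noteq> 0"
  shows "amenable (poly p) UNIV"
proof -
  obtain A where A0: "A > 0" and Ab: "\<And>z. \<bar>z^2 * poly (pderiv (pderiv p)) z * poly p z\<bar> \<le> A * ((poly p z)^2 + z^2 * (poly (pderiv p) z)^2)"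
    using star[OF assms] by blast
  define C where "C = 2 * (A + 2) + 4"
  have C0: "C > 0" "C \<ge> 4" "C \<ge> 2 * (A + 2)" unfolding C_def using A0 by auto
  have mu_nz: "mu_cond (poly p) z = ereal (1 + \<bar>z * poly (pderiv p) z / poly p z\<bar>)"
    if "z \<noteq> 0" "poly p z \<noteq> 0" for z
    using that unfolding mu_cond_def cond_num_def deriv_poly_eq by (simp add: abs_mult abs_divide)
  have mu0: "mu_cond (poly p) 0 = 1" unfolding mu_cond_def cond_num_def by simp
  have main: "mu_cond (poly p) y \<le> ereal C * mu_cond (poly p) x"
    if fin: "cond_num (poly p) x < \<infinity>" and rd: "rel_dist y x < 1 / (ereal C * mu_cond (poly p) x)" for x y
  proof (cases "x = 0")
    case True
    have "rel_dist y x < ereal (1 / C)" using rd C0 unfolding True mu0 by (simp add: one_div_ereal)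
    hence "y = 0" unfolding rel_dist_def True by (auto split: if_splits)
    thus ?thesis using True mu0 C0 by simp
  next
    case False
    hence px: "poly p x \<noteq> 0" using fin unfolding cond_num_def by (auto split: if_splits)
    define \<mu> where "\<mu> = 1 + \<bar>x * poly (pderiv p) x / poly p x\<bar>"
    have mu1: "\<mu> \<ge> 1" unfolding \<mu>_def by simp
    have mux: "mu_cond (poly p) x = ereal \<mu>" unfolding \<mu>_def by (rule mu_nz[OF False px])
    have Cmu: "C * \<mu> > 0" using C0 mu1 by simp
    have rd': "rel_dist y x < ereal (1 / (C * \<mu>))" using rd one_div_ereal[of "C * \<mu>"] Cmu C0 mu1 unfolding mux by simp
    have yx: "y * x > 0" and lnb: "\<bar>ln (x / y)\<bar> < 1 / (C * \<mu>)"
    proof -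
      have "\<not> (y = 0 \<and> x = 0)" using False by simp
      moreover have "y * x > 0"
      proof (rule ccontr)
        assume "\<not> y * x > 0"
        hence "rel_dist y x = \<infinity>" unfolding rel_dist_def using False by auto
        thus False using rd' by simp
      qed
      ultimately show "y * x > 0" "\<bar>ln (x / y)\<bar> < 1 / (C * \<mu>)" using rd' unfolding rel_dist_def by auto
    qed
    define S where "S = ln (y / x)"
    have yxpos: "y / x > 0" using yx by (simp add: zero_less_divide_iff zero_less_mult_iff)
    have yS: "y = x * exp S" unfolding S_def using yxpos False by simp
    have absS: "\<bar>S\<bar> = \<bar>ln (x / y)\<bar>" unfolding S_def using yxpos yx
      by (metis abs_minus_cancel inverse_divide ln_inverse)
    have Smu: "\<bar>S\<bar> * (C * \<mu>) \<le> 1" using lnb absS Cmu by (simp add: pos_less_divide_eq less_imp_le)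
    have S1: "\<bar>S\<bar> * (A + 2) * \<mu> \<le> 1/2"
    proof -
      have "\<bar>S\<bar> * (2 * (A + 2)) * \<mu> \<le> \<bar>S\<bar> * C * \<mu>" using C0 mu1 by (intro mult_right_mono mult_left_mono) auto
      thus ?thesis using Smu by (simp add: algebra_simps)
    qed
    have S2: "\<bar>S\<bar> * \<mu> \<le> 1/4"
    proof -
      have "\<bar>S\<bar> * 4 * \<mu> \<le> \<bar>S\<bar> * C * \<mu>" using C0 mu1 by (intro mult_right_mono mult_left_mono) auto
      thus ?thesis using Smu by (simp add: algebra_simps)
    qed
    from path_lemma[OF Ab A0 False px S1[unfolded \<mu>_def] S2[unfolded \<mu>_def]]
    have py: "poly p y \<noteq> 0" and bnd: "1 + \<bar>y * poly (pderiv p) y / poly p y\<bar> \<le> 4 * \<mu>"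
      unfolding yS[symmetric] \<mu>_def by auto
    have y0: "y \<noteq> 0" using yx by auto
    have "mu_cond (poly p) y = ereal (1 + \<bar>y * poly (pderiv p) y / poly p y\<bar>)" by (rule mu_nz[OF y0 py])
    also have "\<dots> \<le> ereal (C * \<mu>)"
    proof -
      have "4 * \<mu> \<le> C * \<mu>" using C0 mu1 by (intro mult_right_mono) auto
      thus ?thesis using bnd by simp
    qed
    also have "\<dots> = ereal C * mu_cond (poly p) x" unfolding mux by simp
    finally show ?thesis .
  qed
  show ?thesis unfolding amenable_def using C0 main by blast
qed

end
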